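(* For each $\mathrm{X}\in\{\mathbf{O},\mathbf{SO},\mathbf{R}\}$, the $\mathrm{X}$-chase is hereditary: for any factbase $F$, any set of existential rules $\mathcal R$, any $\mathrm{X}$-chase derivation $\mathcal D$ from $F$ and $\mathcal R$, and any $F'\subseteq F$, the restriction $\mathcal D_{|F'}$ of $\mathcal D$ induced by $F'$ is an $\mathrm{X}$-chase derivation.
   Context: First-order setting with constants and variables, no function symbols; a factbase is a set of atoms; a homomorphism from $A$ to $B$ is a substitution $\pi$ with $\pi(A)\subseteq B$. An existential rule $R=(B,H)$ is $\forall\bar x\forall\bar y(B(\bar x,\bar y)\to\exists\bar z\,H(\bar x,\bar z))$; its frontier is $\bar x$. A trigger $(R,\pi)$ on $F$ has $\pi:B\to F$ a homomorphism; $\pi^s$ maps each existential variable $z$ to a fresh variable $z_{(R,\pi)}$; $F\cup\pi^s(H)$ is the immediate derivation. A derivation from $F$ and $\mathcal R$ is a (possibly infinite) sequence $D_0=(\emptyset,\emptyset,F)$, $D_i=(R_i,\pi_i,F_i)$, $F_i$ the immediate derivation from $F_{i-1}$ through $(R_i,\pi_i)$, triggers pairwise distinct. For a derivation with last factbase $F_n$, a trigger $(R,\pi)$ is: $\mathbf{O}$-applicable if $\pi:B\to F_n$ is a homomorphism; $\mathbf{SO}$-applicable if moreover no trigger $(R,\pi')$ already in the derivation has $\pi'$ equal to $\pi$ on the frontier of $R$; $\mathbf{R}$-applicable if $\pi:B\to F_n$ is a homomorphism not extendable to a homomorphism $B\cup H\to F_n$. An $\mathbf{O}$-chase derivation is any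 derivation; an $\mathbf{SO}$- (resp. $\mathbf{R}$-) chase derivation is one where each trigger is $\mathbf{SO}$- (resp. $\mathbf{R}$-) applicable on its prefix. For $G\subseteq F$, the restriction $\mathcal D_{|G}$ is the maximal derivation from $G$ and $\mathcal R$ whose trigger sequence is a subsequence of the trigger sequence of $\mathcal D$. *)

theory Defs
  imports Main "HOL-Library.Infinite_Set" "HOL-Library.Extended_Nat"
begin

datatype ('c,'x) rterm = RC 'c | RV 'x

type_synonym ('p,'c,'x) ratom = "'p \<times> ('c,'x) rterm list"

type_synonym ('p,'c,'x) rule = "('p,'c,'x) ratom set \<times> ('p,'c,'x) ratom set"

text \<open>Variables occurring in factbases: either base variables, or the fresh
  variable z_(R,pi) created for existential variable z by trigger (R,pi);
  pi is the homomorphism of the trigger, a partial map defined exactly on the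
  variables of the body of R.\<close>
datatype ('p,'c,'x,'v) fvar =
    Base 'v
  | Null 'x "('p,'c,'x) rule" "'x \<Rightarrow> ('p,'c,'x,'v) fterm option"
and ('p,'c,'x,'v) fterm = FC 'c | FV "('p,'c,'x,'v) fvar"

type_synonym ('p,'c,'x,'v) fatom = "'p \<times> ('p,'c,'x,'v) fterm list"
type_synonym ('p,'c,'x,'v) factbase = "('p,'c,'x,'v) fatom set"
type_synonym ('p,'c,'x,'v) trigger =
  "('p,'c,'x) rule \<times> ('x \<Rightarrow> ('p,'c,'x,'v) fterm option)"

fun rvars_term :: "('c,'x) rterm \<Rightarrow> 'x set" where
  "rvars_term (RC c) = {}"
| "rvars_term (RV x) = {x}"

definition rvars :: "('p,'c,'x) ratom set \<Rightarrow> 'x set" where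
  "rvars A = (\<Union>a\<in>A. \<Union>t\<in>set (snd a). rvars_term t)"

definition body :: "('p,'c,'x) rule \<Rightarrow> ('p,'c,'x) ratom set" where
  "body R = fst R"

definition head :: "('p,'c,'x) rule \<Rightarrow> ('p,'c,'x) ratom set" where
  "head R = snd R"

definition frontier :: "('p,'c,'x) rule \<Rightarrow> 'x set" where
  "frontier R = rvars (body R) \<inter> rvars (head R)"

fun subst_term :: "('x \<Rightarrow> ('p,'c,'x,'v) fterm) \<Rightarrow> ('c,'x) rterm \<Rightarrow> ('p,'c,'x,'v) fterm" where
  "subst_term \<sigma> (RC c) = FC c"
| "subst_term \<sigma> (RV x) = \<sigma> x"

definition subst_atom :: "('x \<Rightarrow> ('p,'c,'x,'v) fterm) \<Rightarrow> ('p,'c,'x) ratom \<Rightarrow> ('p,'c,'x,'v) fatom" where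
  "subst_atom \<sigma> a = (fst a, map (subst_term \<sigma>) (snd a))"

definition subst_set :: "('x \<Rightarrow> ('p,'c,'x,'v) fterm) \<Rightarrow> ('p,'c,'x) ratom set \<Rightarrow> ('p,'c,'x,'v) factbase" where
  "subst_set \<sigma> A = subst_atom \<sigma> ` A"

definition is_hom :: "('x \<Rightarrow> ('p,'c,'x,'v) fterm option) \<Rightarrow> ('p,'c,'x) ratom set \<Rightarrow> ('p,'c,'x,'v) factbase \<Rightarrow> bool" where
  "is_hom \<pi> B F \<longleftrightarrow> dom \<pi> = rvars B \<and> subst_set (\<lambda>x. the (\<pi> x)) B \<subseteq> F"

definition pi_safe :: "('p,'c,'x) rule \<Rightarrow> ('x \<Rightarrow> ('p,'c,'x,'v) fterm option) \<Rightarrow> 'x \<Rightarrow> ('p,'c,'x,'v) fterm" where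
  "pi_safe R \<pi> x = (if x \<in> rvars (body R) then the (\<pi> x) else FV (Null x R \<pi>))"

definition trig_output :: "('p,'c,'x,'v) trigger \<Rightarrow> ('p,'c,'x,'v) factbase" where
  "trig_output t = subst_set (pi_safe (fst t) (snd t)) (head (fst t))"

text \<open>A derivation from F is given by its length (possibly infinite) and the
  sequence of triggers trig 0, trig 1, ... (trig i is the trigger of D_(i+1)).
  fb F trig i is the factbase F_i.\<close>
primrec fb :: "('p,'c,'x,'v) factbase \<Rightarrow> (nat \<Rightarrow> ('p,'c,'x,'v) trigger) \<Rightarrow> nat \<Rightarrow> ('p,'c,'x,'v) factbase" where
  "fb F trig 0 = F"
| "fb F trig (Suc i) = fb F trig i \<union> trig_output (trig i)"

definition O_applicable :: "('p,'c,'x,'v) factbase \<Rightarrow> ('p,'c,'x,'v) trigger \<Rightarrow> bool" where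
  "O_applicable Fn t \<longleftrightarrow> is_hom (snd t) (body (fst t)) Fn"

definition SO_applicable :: "('p,'c,'x,'v) trigger set \<Rightarrow> ('p,'c,'x,'v) factbase \<Rightarrow> ('p,'c,'x,'v) trigger \<Rightarrow> bool" where
  "SO_applicable prev Fn t \<longleftrightarrow> O_applicable Fn t \<and>
     \<not> (\<exists>\<pi>'. (fst t, \<pi>') \<in> prev \<and> (\<forall>x\<in>frontier (fst t). \<pi>' x = snd t x))"

definition R_applicable :: "('p,'c,'x,'v) factbase \<Rightarrow> ('p,'c,'x,'v) trigger \<Rightarrow> bool" where
  "R_applicable Fn t \<longleftrightarrow> O_applicable Fn t \<and>
     \<not> (\<exists>\<sigma>. (\<forall>x\<in>rvars (body (fst t)). snd t x = Some (\<sigma> x)) \<and>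
            subst_set \<sigma> (body (fst t) \<union> head (fst t)) \<subseteq> Fn)"

datatype chase_kind = Oblivious | SemiOblivious | Restricted

fun applicable :: "chase_kind \<Rightarrow> ('p,'c,'x,'v) trigger set \<Rightarrow> ('p,'c,'x,'v) factbase \<Rightarrow> ('p,'c,'x,'v) trigger \<Rightarrow> bool" where
  "applicable Oblivious prev Fn t = O_applicable Fn t"
| "applicable SemiOblivious prev Fn t = SO_applicable prev Fn t"
| "applicable Restricted prev Fn t = R_applicable Fn t"

definition is_derivation :: "('p,'c,'x) rule set \<Rightarrow> ('p,'c,'x,'v) factbase \<Rightarrow> enat \<Rightarrow> (nat \<Rightarrow> ('p,'c,'x,'v) trigger) \<Rightarrow> bool" where
  "is_derivation RS F len trig \<longleftrightarrow>
     (\<forall>i. enat i < len \<longrightarrow> fst (trig i) \<in> RS \<and> O_applicable (fb F trig i) (trig i)) \<and>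
     (\<forall>i j. enat i < len \<longrightarrow> enat j < len \<longrightarrow> i \<noteq> j \<longrightarrow> trig i \<noteq> trig j)"

text \<open>X-chase derivation: each trigger is X-applicable on its prefix, whose last
  factbase is F_i and whose triggers are trig 0, ..., trig (i-1).\<close>
definition is_chase_derivation :: "chase_kind \<Rightarrow> ('p,'c,'x) rule set \<Rightarrow> ('p,'c,'x,'v) factbase \<Rightarrow> enat \<Rightarrow> (nat \<Rightarrow> ('p,'c,'x,'v) trigger) \<Rightarrow> bool" where
  "is_chase_derivation X RS F len trig \<longleftrightarrow> is_derivation RS F len trig \<and>
     (\<forall>i. enat i < len \<longrightarrow> applicable X (trig ` {..<i}) (fb F trig i) (trig i))"

text \<open>rfb G len trig i: last factbase of the restriction after scanning the first i
  triggers of D; a trigger of D is kept iff it is a trigger on the current factbase.\<close>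
primrec rfb :: "('p,'c,'x,'v) factbase \<Rightarrow> enat \<Rightarrow> (nat \<Rightarrow> ('p,'c,'x,'v) trigger) \<Rightarrow> nat \<Rightarrow> ('p,'c,'x,'v) factbase" where
  "rfb G len trig 0 = G"
| "rfb G len trig (Suc i) =
     (if enat i < len \<and> O_applicable (rfb G len trig i) (trig i)
      then rfb G len trig i \<union> trig_output (trig i) else rfb G len trig i)"

definition kept :: "('p,'c,'x,'v) factbase \<Rightarrow> enat \<Rightarrow> (nat \<Rightarrow> ('p,'c,'x,'v) trigger) \<Rightarrow> nat set" where
  "kept G len trig = {i. enat i < len \<and> O_applicable (rfb G len trig i) (trig i)}"

definition restr_len :: "('p,'c,'x,'v) factbase \<Rightarrow> enat \<Rightarrow> (nat \<Rightarrow> ('p,'c,'x,'v) trigger) \<Rightarrow> enat" where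
  "restr_len G len trig = (if finite (kept G len trig) then enat (card (kept G len trig)) else \<infinity>)"

definition restr_trig :: "('p,'c,'x,'v) factbase \<Rightarrow> enat \<Rightarrow> (nat \<Rightarrow> ('p,'c,'x,'v) trigger) \<Rightarrow> nat \<Rightarrow> ('p,'c,'x,'v) trigger" where
  "restr_trig G len trig j = trig (enumerate (kept G len trig) j)"

end

theory Submission
  imports Defs
begin

lemma rfb_sub:
  assumes "G \<subseteq> F"
  shows "rfb G len trig i \<subseteq> fb F trig i"
  using assms by (induction i) auto

lemma rfb_union:
  "rfb G len trig i = G \<union> (\<Union>k\<in>{k\<in>kept G len trig. k < i}. trig_output (trig k))"
proof (induction i)
  case 0
  then show ?case by simp
next
  case (Suc i)
  have "{k\<in>kept G len trig. k < Suc i} = {k\<in>kept G len trig. k < i} \<union>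
      (if enat i < len \<and> O_applicable (rfb G len trig i) (trig i) then {i} else {})"
    by (auto simp: kept_def less_Suc_eq)
  then show ?case using Suc by auto
qed

lemma fb_union: "fb G t j = G \<union> (\<Union>k\<in>{..<j}. trig_output (t k))"
  by (induction j) (auto simp: lessThan_Suc)

lemma enum_facts:
  fixes K :: "nat set"
  defines "rl \<equiv> (if finite K then enat (card K) else \<infinity>)"
  assumes j: "enat j < rl"
  shows "enumerate K j \<in> K"
    and "\<And>k. k < j \<Longrightarrow> enumerate K k < enumerate K j"
    and "enumerate K ` {..<j} = {i\<in>K. i < enumerate K j}"
proof -
  show inK: "enumerate K j \<in> K"
    using j by (cases "finite K") (auto simp: rl_def finite_enumerate_in_set enumerate_in_set)
  show mono: "\<And>k. k < j \<Longrightarrow> enumerate K k < enumerate K j"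
    using j by (cases "finite K") (auto simp: rl_def finite_enumerate_mono enumerate_mono)
  show "enumerate K ` {..<j} = {i\<in>K. i < enumerate K j}"
  proof
    show "enumerate K ` {..<j} \<subseteq> {i\<in>K. i < enumerate K j}"
    proof
      fix i assume "i \<in> enumerate K ` {..<j}"
      then obtain k where k: "k < j" "i = enumerate K k" by auto
      have "i \<in> K"
        using j k by (cases "finite K") (auto simp: rl_def finite_enumerate_in_set enumerate_in_set)
      then show "i \<in> {i\<in>K. i < enumerate K j}" using mono k by auto
    qed
  next
    show "{i\<in>K. i < enumerate K j} \<subseteq> enumerate K ` {..<j}"
    proof
      fix i assume i: "i \<in> {i\<in>K. i < enumerate K j}"
      obtain k where k: "enumerate K k = i" "finite K \<longrightarrow> k < card K"
        using i finite_enumerate_Ex[of K i] enumerate_Ex[of K i] by blast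
      have "k < j"
      proof (rule ccontr)
        assume "\<not> k < j"
        then have "j \<le> k" by simp
        then have "enumerate K j \<le> enumerate K k"
          using k j by (cases "finite K") (auto simp: rl_def finite_le_enumerate le_enumerate
              finite_enumerate_mono enumerate_mono le_less)
        then show False using i k by auto
      qed
      then show "i \<in> enumerate K ` {..<j}" using k by auto
    qed
  qed
qed

theorem proposition3:
  fixes X :: chase_kind
    and RS :: "('p,'c,'x) rule set"
    and F F' :: "('p,'c,'x,'v) factbase"
    and len :: enat
    and trig :: "nat \<Rightarrow> ('p,'c,'x,'v) trigger"
  assumes "is_chase_derivation X RS F len trig"
    and "F' \<subseteq> F"
  shows "is_chase_derivation X RS F' (restr_len F' len trig) (restr_trig F' len trig)"
proof -
  define K where "K = kept F' len trig"
  define e where "e = enumerate K"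
  define rl where "rl = restr_len F' len trig"
  define rt where "rt = restr_trig F' len trig"
  have rl: "rl = (if finite K then enat (card K) else \<infinity>)"
    by (simp add: rl_def K_def restr_len_def)
  have rt: "rt j = trig (e j)" for j by (simp add: rt_def e_def K_def restr_trig_def)
  have der: "is_derivation RS F len trig" and app: "\<And>i. enat i < len \<Longrightarrow> applicable X (trig ` {..<i}) (fb F trig i) (trig i)"
    using assms(1) by (auto simp: is_chase_derivation_def)
  have inK: "e j \<in> K" if "enat j < rl" for j
    using enum_facts(1)[of j K] that rl e_def by simp
  have mono: "e k < e j" if "enat j < rl" "k < j" for j k
    using enum_facts(2)[of j K] that rl e_def by simp
  have img: "e ` {..<j} = {i\<in>K. i < e j}" if "enat j < rl" for j
    using enum_facts(3)[of j K] that rl e_def by simp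
  have lenK: "enat (e j) < len" and OK: "O_applicable (rfb F' len trig (e j)) (trig (e j))"
    if "enat j < rl" for j
    using inK[OF that] by (auto simp: K_def kept_def)
  have fbeq: "fb F' rt j = rfb F' len trig (e j)" if "enat j < rl" for j
  proof -
    have "fb F' rt j = F' \<union> (\<Union>k\<in>{..<j}. trig_output (trig (e k)))"
      by (simp add: fb_union rt)
    also have "\<dots> = F' \<union> (\<Union>i\<in>e ` {..<j}. trig_output (trig i))" by simp
    also have "\<dots> = rfb F' len trig (e j)"
      using img[OF that] by (simp add: rfb_union K_def)
    finally show ?thesis .
  qed
  have sub: "fb F' rt j \<subseteq> fb F trig (e j)" if "enat j < rl" for j
    using fbeq[OF that] rfb_sub[OF assms(2)] by simp
  have d: "is_derivation RS F' rl rt"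
    unfolding is_derivation_def
  proof (intro conjI allI impI)
    fix i assume i: "enat i < rl"
    show "fst (rt i) \<in> RS" using der lenK[OF i] by (simp add: is_derivation_def rt)
    show "O_applicable (fb F' rt i) (rt i)" using OK[OF i] fbeq[OF i] by (simp add: rt)
  next
    fix i j assume i: "enat i < rl" and j: "enat j < rl" and ij: "i \<noteq> j"
    have "e i \<noteq> e j"
      using mono[OF i] mono[OF j] ij by (metis less_irrefl nat_neq_iff)
    then show "rt i \<noteq> rt j"
      using der lenK[OF i] lenK[OF j] by (simp add: is_derivation_def rt)
  qed
  have "applicable X (rt ` {..<j}) (fb F' rt j) (rt j)" if j: "enat j < rl" for j
  proof -
    have Oa: "O_applicable (fb F' rt j) (rt j)" using OK[OF j] fbeq[OF j] by (simp add: rt)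
    have A: "applicable X (trig ` {..<e j}) (fb F trig (e j)) (trig (e j))"
      using app lenK[OF j] by blast
    have prev: "rt ` {..<j} \<subseteq> trig ` {..<e j}"
      using mono[OF j] by (auto simp: rt)
    show ?thesis
    proof (cases X)
      case Oblivious
      then show ?thesis using Oa by simp
    next
      case SemiOblivious
      then show ?thesis using Oa A prev by (auto simp: SO_applicable_def rt)
    next
      case Restricted
      then show ?thesis using Oa A sub[OF j] by (auto simp: R_applicable_def rt) blast
    qed
  qed
  then show ?thesis using d by (simp add: is_chase_derivation_def rl_def rt_def)
qed

end
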